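(* Consider the randomized algorithm Channel-Screening in which, in every round, every active station, independently for each channel $\beta\in\{1,\dots,b\}$ and independently of all other random choices, transmits a message on channel $\beta$ with probability $k^{-\beta/b}$, until a message is heard on some channel. Let $t$ be a time step and let $1\le\beta\le b$ be such that $k^{(\beta-1)/b}\le |W(t)|\le k^{\beta/b}$, where $W(t)$ is the set of stations active at time step $t$. Then the probability that a message is heard on channel $\beta$ at time step $t$ (i.e. exactly one station transmits on $\beta$ at time step $t$) is at least $\frac{1}{2ek^{1/b}}$.
   Context: Model: multi-channel single-hop radio network with $b$ channels numbered $1,\dots,b$, synchronous rounds, no collision detection; a message on a channel in a round is heard by everybody iff exactly one station transmits on that channel in that round. At most $k$ stations are activated spontaneously at arbitrary times; $k$ is known to the stations, and only active stations execute the algorithm. *)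

theory Defs
  imports "HOL-Probability.Probability"
begin

definition cs_prob :: "nat \<Rightarrow> nat \<Rightarrow> nat \<Rightarrow> real" where
  "cs_prob k b \<beta> = real k powr (- real \<beta> / real b)"

definition cs_round :: "'s set \<Rightarrow> nat \<Rightarrow> nat \<Rightarrow> ('s \<times> nat \<Rightarrow> bool) pmf" where
  "cs_round W k b = Pi_pmf (W \<times> {1..b}) False (\<lambda>(s, \<beta>). bernoulli_pmf (cs_prob k b \<beta>))"

definition heard_on :: "'s set \<Rightarrow> nat \<Rightarrow> ('s \<times> nat \<Rightarrow> bool) \<Rightarrow> bool" where
  "heard_on W \<beta> f \<longleftrightarrow> card {s \<in> W. f (s, \<beta>)} = 1"

end

theory Submission imports Defs begin

lemma powbound:
  fixes n :: nat and p :: real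
  assumes "n \<ge> 1" "0 \<le> p" "p * n \<le> 1"
  shows "exp (-1) \<le> (1 - p) ^ (n - 1)"
proof (cases "n = 1")
  case True then show ?thesis by simp
next
  case False
  define m where "m = n - 1"
  have m0: "m > 0" using False assms m_def by auto
  have nm: "real n = real m + 1" using assms m_def by auto
  have p: "p \<le> 1 / (real m + 1)" using assms nm by (simp add: field_simps)
  have "(1 - 1 / (real m + 1)) ^ m \<le> (1 - p) ^ m"
    by (rule power_mono) (use p in auto)
  moreover have "(1 + 1 / real m) ^ m \<le> exp 1"
    using exp_ge_one_plus_x_over_n_power_n[of m 1] m0 by simp
  moreover have "(1 - 1 / (real m + 1)) ^ m * (1 + 1 / real m) ^ m = 1"
  proof -
    have "(1 - 1 / (real m + 1)) * (1 + 1 / real m) = 1" using m0 by (simp add: field_simps) (smt (verit) of_nat_0_less_iff mult_pos_pos)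
    then show ?thesis by (metis power_mult_distrib power_one)
  qed
  moreover have "(1 + 1 / real m) ^ m > 0" by (intro zero_less_power) (simp add: add_pos_nonneg)
  ultimately have "exp (-1) \<le> (1 - 1 / (real m + 1)) ^ m"
  proof -
    assume a: "(1 - 1 / (real m + 1)) ^ m \<le> (1 - p) ^ m" "(1 + 1 / real m) ^ m \<le> exp 1"
      "(1 - 1 / (real m + 1)) ^ m * (1 + 1 / real m) ^ m = 1" "(1 + 1 / real m) ^ m > 0"
    then have "(1 - 1 / (real m + 1)) ^ m = 1 / (1 + 1 / real m) ^ m"
      by (metis eq_divide_eq less_irrefl)
    also have "\<dots> \<ge> 1 / exp 1" using a by (intro divide_left_mono) auto
    finally show ?thesis by (simp add: exp_minus field_simps)
  qed
  then show ?thesis using \<open>(1 - 1 / (real m + 1)) ^ m \<le> (1 - p) ^ m\<close> m_def by simp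
qed

theorem lemma3:
  fixes W :: "'s set" and k b \<beta> :: nat
  assumes "finite W" and "k \<ge> 1" and "1 \<le> \<beta>" and "\<beta> \<le> b"
    and "real k powr ((real \<beta> - 1) / real b) \<le> real (card W)"
    and "real (card W) \<le> real k powr (real \<beta> / real b)"
  shows "measure_pmf.prob (cs_round W k b) {f. heard_on W \<beta> f}
           \<ge> 1 / (2 * exp 1 * real k powr (1 / real b))"
proof -
  define A where "A = W \<times> {1..b}"
  define q where "q = cs_prob k b \<beta>"
  define n where "n = card W"
  have finA: "finite A" using assms(1) by (simp add: A_def)
  have qrange: "0 \<le> cs_prob k b g \<and> cs_prob k b g \<le> 1" for g
  proof -
    have "real k powr (- real g / real b) \<le> real k powr 0"
      by (rule powr_mono) (use assms(2) in auto)
    then show ?thesis using assms(2) by (simp add: cs_prob_def)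
  qed
  have q01: "0 \<le> q" "q \<le> 1" using qrange q_def by auto
  have b0: "b > 0" using assms(3,4) by simp
  define B where "B = (\<lambda>s (x :: 's \<times> nat). if snd x = \<beta> then {fst x = s} else (UNIV :: bool set))"
  define E where "E = (\<lambda>s. Pi A (B s))"
  define P where "P = cs_round W k b"
  have sub: "(\<Union>s\<in>W. E s) \<subseteq> {f. heard_on W \<beta> f}"
  proof
    fix f assume "f \<in> (\<Union>s\<in>W. E s)"
    then obtain s where s: "s \<in> W" "f \<in> E s" by auto
    have "{s' \<in> W. f (s', \<beta>)} = {s}"
    proof -
      have "f (s', \<beta>) = (s' = s)" if "s' \<in> W" for s'
      proof -
        have "(s', \<beta>) \<in> A" using that assms(3,4) by (simp add: A_def)
        then have "f (s', \<beta>) \<in> B s (s', \<beta>)" using s(2) by (auto simp: E_def Pi_def)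
        then show ?thesis by (simp add: B_def)
      qed
      then show ?thesis using s(1) by auto
    qed
    then show "f \<in> {f. heard_on W \<beta> f}" by (simp add: heard_on_def)
  qed
  have disj: "disjoint_family_on E W"
  proof (unfold disjoint_family_on_def, intro ballI impI)
    fix s t assume st: "s \<in> W" "t \<in> W" "s \<noteq> t"
    show "E s \<inter> E t = {}"
    proof (rule ccontr)
      assume "E s \<inter> E t \<noteq> {}"
      then obtain f where f: "f \<in> E s" "f \<in> E t" by auto
      have "(s, \<beta>) \<in> A" using st assms(3,4) by (simp add: A_def)
      then have "f (s, \<beta>) \<in> B s (s, \<beta>)" "f (s, \<beta>) \<in> B t (s, \<beta>)" using f by (auto simp: E_def Pi_def)
      then have "f (s, \<beta>) = True" "f (s, \<beta>) = (s = t)" by (auto simp: B_def)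
      then show False using st by simp
    qed
  qed
  have ES: "measure_pmf.prob P (E s) = q * (1 - q) ^ (n - 1)" if sW: "s \<in> W" for s
  proof -
    define g where "g = (\<lambda>s' \<gamma>. if \<gamma> = \<beta> then (if s' = s then q else 1 - q) else (1::real))"
    have "measure_pmf.prob P (E s) = (\<Prod>x\<in>A. measure_pmf.prob ((\<lambda>(s, \<beta>). bernoulli_pmf (cs_prob k b \<beta>)) x) (B s x))"
      unfolding P_def cs_round_def E_def A_def using finA A_def by (intro measure_Pi_pmf_Pi) simp
    also have "\<dots> = (\<Prod>x\<in>A. case x of (s', \<gamma>) \<Rightarrow> g s' \<gamma>)"
    proof (intro prod.cong refl)
      fix x assume "x \<in> A"
      obtain s' \<gamma> where x: "x = (s', \<gamma>)" by force
      show "measure_pmf.prob ((\<lambda>(s, \<beta>). bernoulli_pmf (cs_prob k b \<beta>)) x) (B s x) = (case x of (s', \<gamma>) \<Rightarrow> g s' \<gamma>)"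
        using qrange[of \<beta>] by (auto simp: x B_def g_def q_def measure_pmf_single)
    qed
    also have "\<dots> = (\<Prod>s'\<in>W. \<Prod>\<gamma>\<in>{1..b}. g s' \<gamma>)"
      unfolding A_def by (rule prod.cartesian_product[symmetric])
    also have "\<dots> = (\<Prod>s'\<in>W. (if s' = s then q else 1 - q))"
    proof (intro prod.cong refl)
      fix s' assume "s' \<in> W"
      have "(\<Prod>\<gamma>\<in>{1..b}. g s' \<gamma>) = g s' \<beta> * (\<Prod>\<gamma>\<in>{1..b} - {\<beta>}. g s' \<gamma>)"
        using assms(3,4) by (intro prod.remove) auto
      also have "(\<Prod>\<gamma>\<in>{1..b} - {\<beta>}. g s' \<gamma>) = 1"
        by (intro prod.neutral) (auto simp: g_def)
      finally show "(\<Prod>\<gamma>\<in>{1..b}. g s' \<gamma>) = (if s' = s then q else 1 - q)" by (simp add: g_def)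
    qed
    also have "\<dots> = q * (\<Prod>s'\<in>W - {s}. (if s' = s then q else 1 - q))"
      using sW assms(1) by (subst prod.remove) auto
    also have "(\<Prod>s'\<in>W - {s}. (if s' = s then q else 1 - q)) = (\<Prod>s'\<in>W - {s}. 1 - q)"
      by (intro prod.cong) auto
    also have "\<dots> = (1 - q) ^ (n - 1)" using sW assms(1) by (simp add: n_def)
    finally show ?thesis .
  qed
  have "measure_pmf.prob P (\<Union>s\<in>W. E s) = (\<Sum>s\<in>W. measure_pmf.prob P (E s))"
    using assms(1) disj by (intro measure_pmf.finite_measure_finite_Union) auto
  also have "\<dots> = real n * (q * (1 - q) ^ (n - 1))" using ES by (simp add: n_def)
  finally have eq: "measure_pmf.prob P (\<Union>s\<in>W. E s) = real n * q * (1 - q) ^ (n - 1)" by simp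
  have "measure_pmf.prob P (\<Union>s\<in>W. E s) \<le> measure_pmf.prob P {f. heard_on W \<beta> f}"
    using sub by (intro measure_pmf.finite_measure_mono) auto
  moreover have "1 / (2 * exp 1 * real k powr (1 / real b)) \<le> real n * q * (1 - q) ^ (n - 1)"
  proof -
    have k0: "real k > 0" using assms(2) by simp
    have n1: "real n \<ge> 1"
    proof -
      have "real k powr 0 \<le> real k powr ((real \<beta> - 1) / real b)"
        by (rule powr_mono) (use assms(2,3) b0 in auto)
      then show ?thesis using assms(5) k0 by (simp add: n_def)
    qed
    then have n1': "n \<ge> 1" by simp
    have "real n * q \<le> real k powr (real \<beta> / real b) * real k powr (- real \<beta> / real b)"
      using assms(6) q01 by (auto simp: q_def cs_prob_def n_def intro: mult_right_mono)
    also have "\<dots> = 1" using k0 by (simp add: powr_add[symmetric])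
    finally have nq1: "q * real n \<le> 1" by (simp add: mult.commute)
    have "real k powr ((real \<beta> - 1) / real b) * real k powr (- real \<beta> / real b) \<le> real n * q"
      using assms(5) q01 by (auto simp: q_def cs_prob_def n_def intro: mult_right_mono)
    moreover have "real k powr ((real \<beta> - 1) / real b) * real k powr (- real \<beta> / real b) = 1 / real k powr (1 / real b)"
    proof -
      have "(real \<beta> - 1) / real b + (- real \<beta> / real b) = - (1 / real b)"
        using b0 by (simp add: field_simps)
      then show ?thesis using k0 by (simp only: powr_add[symmetric] powr_minus) (simp add: divide_inverse)
    qed
    ultimately have lo: "1 / real k powr (1 / real b) \<le> real n * q" by simp
    have e: "exp (-1) \<le> (1 - q) ^ (n - 1)" using powbound[OF n1' q01(1) nq1] .
    have "1 / (2 * exp 1 * real k powr (1 / real b)) \<le> (1 / real k powr (1 / real b)) * exp (-1)"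
      using k0 by (simp add: exp_minus field_simps)
    also have "\<dots> \<le> real n * q * (1 - q) ^ (n - 1)"
      using lo e q01 by (intro mult_mono) auto
    finally show ?thesis .
  qed
  ultimately show ?thesis using eq by (simp add: P_def)
qed

end
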